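(* Consider the two-player game (defined in the context) in which each player, after learning its valuation, chooses a latency $t>0$ and a bid $m\ge0$, and let $b(g)=\int_0^1 m(v)\,dv$ be the expected equilibrium bid of a player in the symmetric equilibrium with strictly increasing score in which a zero-valuation type invests nothing. Then $\lim_{g\to\infty}b(g)=\frac16$, and $b(g)$ is an increasing function of $g$ for all sufficiently large $g$.
   Context: Fix $g>0$. Two players have valuations $v_1,v_2$ drawn independently and uniformly from $[0,1]$. After observing its valuation, a player chooses a bid $m\ge0$ and a latency $t>0$ (the time after the arbitrage opportunity at which its transaction reaches the sequencer), at total cost $m+\frac1t$. Its score is $s=\frac{gm}{m+1}-t$. The player with the higher score has its transaction ordered first and receives its valuation; costs are paid regardless, so the payoff is $v_i\cdot\mathbf{1}[\text{higher score}]-m-\frac1t$. In equilibrium each type $v$ chooses a cost-minimizing pair $(m(v),t(v))$ producing its equilibrium score $s(v)$. *)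

theory Defs
  imports "HOL-Analysis.Analysis"
begin

definition score :: "real \<Rightarrow> real \<Rightarrow> real \<Rightarrow> real" where
  "score g m t = g * m / (m + 1) - t"

definition cost :: "real \<Rightarrow> real \<Rightarrow> real" where
  "cost m t = m + 1 / t"

text \<open>Probability that a player choosing score s beats the opponent, whose valuation
  is uniform on [0,1] and who plays the strategy sigma (the single type v = 0,
  a null set, is excluded: it has no optimal action since t > 0).\<close>
definition win_prob :: "real \<Rightarrow> (real \<Rightarrow> real \<times> real) \<Rightarrow> real \<Rightarrow> real" where
  "win_prob g \<sigma> s = measure lborel {w \<in> {0<..1}. score g (fst (\<sigma> w)) (snd (\<sigma> w)) < s}"

definition payoff :: "real \<Rightarrow> (real \<Rightarrow> real \<times> real) \<Rightarrow> real \<Rightarrow> real \<Rightarrow> real \<Rightarrow> real" where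
  "payoff g \<sigma> v m t = v * win_prob g \<sigma> (score g m t) - cost m t"

text \<open>Symmetric equilibrium with strictly increasing score, cost-minimizing
  choices, and the zero-valuation type investing nothing (cost tends to 0 as v tends to 0).\<close>
definition sym_equilibrium :: "real \<Rightarrow> (real \<Rightarrow> real \<times> real) \<Rightarrow> bool" where
  "sym_equilibrium g \<sigma> \<longleftrightarrow>
     (\<forall>v\<in>{0<..1}. fst (\<sigma> v) \<ge> 0 \<and> snd (\<sigma> v) > 0)
   \<and> strict_mono_on {0<..1} (\<lambda>v. score g (fst (\<sigma> v)) (snd (\<sigma> v)))
   \<and> (\<forall>v\<in>{0<..1}. \<forall>m t. m \<ge> 0 \<longrightarrow> t > 0 \<longrightarrow>
        payoff g \<sigma> v m t \<le> payoff g \<sigma> v (fst (\<sigma> v)) (snd (\<sigma> v)))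
   \<and> (\<forall>v\<in>{0<..1}. \<forall>m t. m \<ge> 0 \<longrightarrow> t > 0 \<longrightarrow>
        score g m t \<ge> score g (fst (\<sigma> v)) (snd (\<sigma> v)) \<longrightarrow>
        cost (fst (\<sigma> v)) (snd (\<sigma> v)) \<le> cost m t)
   \<and> ((\<lambda>v. cost (fst (\<sigma> v)) (snd (\<sigma> v))) \<longlongrightarrow> 0) (at_right 0)"

definition exp_bid :: "(real \<Rightarrow> real \<times> real) \<Rightarrow> real" where
  "exp_bid \<sigma> = integral {0..1} (\<lambda>v. fst (\<sigma> v))"

end

theory Submission
  imports Defs "HOL-Real_Asymp.Real_Asymp"
begin


lemma win_eq:
  assumes eq: "sym_equilibrium g \<sigma>" and u: "u \<in> {0<..1}"
  shows "win_prob g \<sigma> (score g (fst (\<sigma> u)) (snd (\<sigma> u))) = u"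
proof -
  let ?s = "\<lambda>v. score g (fst (\<sigma> v)) (snd (\<sigma> v))"
  have sm: "strict_mono_on {0<..1} ?s" using eq unfolding sym_equilibrium_def by blast
  have "{w \<in> {0<..1}. ?s w < ?s u} = {0<..<u}"
  proof (intro set_eqI iffI)
    fix w assume w: "w \<in> {w \<in> {0<..1}. ?s w < ?s u}"
    show "w \<in> {0<..<u}"
    proof (rule ccontr)
      assume "w \<notin> {0<..<u}"
      with w have "u \<le> w" by auto
      hence "?s u \<le> ?s w" using sm u w strict_mono_on_leD by blast
      with w show False by auto
    qed
  next
    fix w assume w: "w \<in> {0<..<u}"
    hence "?s w < ?s u" using sm u by (auto intro: strict_mono_onD)
    thus "w \<in> {w \<in> {0<..1}. ?s w < ?s u}" using w u by auto
  qed
  thus ?thesis unfolding win_prob_def using u by simp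
qed

lemma ic:
  assumes eq: "sym_equilibrium g \<sigma>" and u: "u \<in> {0<..1}" and v: "v \<in> {0<..1}"
  shows "v * u - cost (fst (\<sigma> u)) (snd (\<sigma> u)) \<le> v * v - cost (fst (\<sigma> v)) (snd (\<sigma> v))"
proof -
  have "payoff g \<sigma> v (fst (\<sigma> u)) (snd (\<sigma> u)) \<le> payoff g \<sigma> v (fst (\<sigma> v)) (snd (\<sigma> v))"
    using eq u v unfolding sym_equilibrium_def by blast
  thus ?thesis unfolding payoff_def using win_eq[OF eq u] win_eq[OF eq v] by simp
qed

lemma const_sq:
  fixes d :: "real \<Rightarrow> real"
  assumes b: "\<And>x y. x \<in> S \<Longrightarrow> y \<in> S \<Longrightarrow> \<bar>d x - d y\<bar> \<le> C * (x - y)^2"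
    and mid: "\<And>x y. x \<in> S \<Longrightarrow> y \<in> S \<Longrightarrow> (x + y) / 2 \<in> S"
    and x: "x \<in> S" and y: "y \<in> S"
  shows "d x = d y"
proof -
  have ind: "\<forall>x\<in>S. \<forall>y\<in>S. \<bar>d x - d y\<bar> \<le> C * (x - y)^2 / 2^k" for k
  proof (induction k)
    case 0 then show ?case using b by simp
  next
    case (Suc k)
    show ?case
    proof (intro ballI)
      fix x y assume x: "x \<in> S" and y: "y \<in> S"
      let ?m = "(x + y) / 2"
      have m: "?m \<in> S" using mid x y .
      have "\<bar>d x - d y\<bar> \<le> \<bar>d x - d ?m\<bar> + \<bar>d ?m - d y\<bar>" by linarith
      also have "\<dots> \<le> C * (x - ?m)^2 / 2^k + C * (?m - y)^2 / 2^k"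
        using Suc x y m by (meson add_mono)
      also have "\<dots> = C * (x - y)^2 / 2^Suc k"
        by (simp add: power2_eq_square field_simps)
      finally show "\<bar>d x - d y\<bar> \<le> C * (x - y)^2 / 2^Suc k" .
    qed
  qed
  show ?thesis
  proof (rule ccontr)
    assume ne: "d x \<noteq> d y"
    let ?e = "\<bar>d x - d y\<bar>"
    have e: "?e > 0" using ne by simp
    obtain k where k: "\<bar>C\<bar> * (x - y)^2 / ?e < 2^k"
      using real_arch_pow[of 2 "\<bar>C\<bar> * (x - y)^2 / ?e"] by auto
    have "?e \<le> C * (x - y)^2 / 2^k" using ind x y by blast
    also have "\<dots> \<le> \<bar>C\<bar> * (x - y)^2 / 2^k"
      by (intro divide_right_mono mult_right_mono) auto
    also have "\<dots> < ?e" using k e by (simp add: field_simps)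
    finally show False by simp
  qed
qed


lemma cost_eq:
  assumes eq: "sym_equilibrium g \<sigma>" and v: "v \<in> {0<..1}"
  shows "cost (fst (\<sigma> v)) (snd (\<sigma> v)) = v^2 / 2"
proof -
  define c where "c w = cost (fst (\<sigma> w)) (snd (\<sigma> w))" for w
  define d where "d w = c w - w^2/2" for w
  have b: "\<bar>d x - d y\<bar> \<le> (1/2) * (x - y)^2" if x: "x \<in> {0<..1}" and y: "y \<in> {0<..1}" for x y
  proof -
    have 1: "x * y - c y \<le> x * x - c x" using ic[OF eq y x] unfolding c_def .
    have 2: "y * x - c x \<le> y * y - c y" using ic[OF eq x y] unfolding c_def .
    show ?thesis using 1 2 unfolding d_def by (auto simp: abs_le_iff power2_eq_square algebra_simps)
  qed
  have const: "d x = d 1" if "x \<in> {0<..1}" for x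
    by (rule const_sq[OF b _ that]) auto
  have lim0: "(d \<longlongrightarrow> 0) (at_right 0)"
  proof -
    have "(c \<longlongrightarrow> 0) (at_right 0)" using eq unfolding sym_equilibrium_def c_def by blast
    moreover have "((\<lambda>w::real. w^2/2) \<longlongrightarrow> 0) (at_right 0)"
      by (rule tendsto_eq_intros refl | simp)+
    ultimately show ?thesis unfolding d_def using tendsto_diff by fastforce
  qed
  have ev: "eventually (\<lambda>w. d w = d 1) (at_right (0::real))"
    unfolding eventually_at_right_field
    by (rule exI[of _ 1]) (auto intro: const)
  have lim1: "(d \<longlongrightarrow> d 1) (at_right 0)"
    by (rule tendsto_eventually) (use ev in auto)
  have "d 1 = 0" using tendsto_unique[OF _ lim1 lim0] by simp
  thus ?thesis using const[OF v] unfolding d_def c_def by simp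
qed

lemma fdiff_gen:
  fixes a c x y :: real
  assumes "x \<ge> 0" "y \<ge> 0" "x < c" "y < c"
  shows "(a^2*y/(y+1) - 1/(c-y)) - (a^2*x/(x+1) - 1/(c-x))
     = (y - x) * (a^2/((x+1)*(y+1)) - 1/((c-x)*(c-y)))"
proof -
  have h: "c - x \<noteq> 0" "c - y \<noteq> 0" "x + 1 \<noteq> 0" "y + 1 \<noteq> 0" using assms by auto
  have e1: "a^2*y/(y+1) - a^2*x/(x+1) = (y - x) * (a^2/((x+1)*(y+1)))"
    using h by (simp add: field_simps)
  have h2: "(c-x)*(c-y) \<noteq> 0" using h by simp
  have e2: "1/(c-y) - 1/(c-x) = (y - x) * (1/((c-x)*(c-y)))"
    using h h2 by (simp add: field_simps)
  show ?thesis using e1 e2 by (simp add: algebra_simps)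
qed

lemma interior_case:
  fixes a c x :: real
  assumes a: "a > 0" and ac: "a * c > 1" and x: "x \<ge> 0" "x < c"
  and M: "M = (a*c - 1)/(a+1)" and ne: "x \<noteq> M"
  shows "(a^2*x/(x+1) - 1/(c-x)) < (a^2*M/(M+1) - 1/(c-M))"
proof -
  have M0: "M > 0" using M a ac by simp
  have cM: "c - M = (M+1)/a" using M a by (simp add: field_simps)
  have Mc: "M < c" using cM M0 a by (smt (verit) divide_pos_pos)
  have br: "a^2/((x+1)*(M+1)) - 1/((c-x)*(c-M)) = a/(M+1) * ((a+1)*(M-x)/((x+1)*(c-x)))"
  proof -
    have "a*(c-x) - (x+1) = (a+1)*(M-x)" using M a by (simp add: field_simps)
    moreover have "a^2/((x+1)*(M+1)) - 1/((c-x)*(c-M)) = a/(M+1) * ((a*(c-x) - (x+1))/((x+1)*(c-x)))"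
    proof -
      have h: "c - x \<noteq> 0" "x + 1 \<noteq> 0" "M + 1 \<noteq> 0" "a \<noteq> 0" using x M0 a by auto
      have q1: "a^2/((x+1)*(M+1)) = a/(M+1) * (a/(x+1))" by (simp add: power2_eq_square)
      have q2: "1/((c-x)*((M+1)/a)) = a/(M+1) * (1/(c-x))" using h by simp
      have h3: "(x+1)*(c-x) \<noteq> 0" using h by simp
      have q3: "a/(x+1) - 1/(c-x) = (a*(c-x) - (x+1))/((x+1)*(c-x))" using h h3 by (simp add: field_simps)
      have "a^2/((x+1)*(M+1)) - 1/((c-x)*(c-M)) = a/(M+1) * (a/(x+1)) - a/(M+1) * (1/(c-x))"
        unfolding cM q1 q2 ..
      also have "\<dots> = a/(M+1) * (a/(x+1) - 1/(c-x))" by (simp add: right_diff_distrib)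
      finally show ?thesis unfolding q3 .
    qed
    ultimately show ?thesis by simp
  qed
  have "(a^2*M/(M+1) - 1/(c-M)) - (a^2*x/(x+1) - 1/(c-x)) = (M - x) * (a/(M+1) * ((a+1)*(M-x)/((x+1)*(c-x))))"
    using fdiff_gen[of x M c a] x M0 Mc br by simp
  also have "\<dots> = a*(a+1)*(M-x)^2/((M+1)*(x+1)*(c-x))" by (simp add: power2_eq_square mult_ac)
  also have "\<dots> > 0" using a x M0 ne by (intro divide_pos_pos mult_pos_pos) auto
  finally show ?thesis by simp
qed

lemma corner_case:
  fixes a c x :: real
  assumes a: "a > 0" and c: "c > 0" and ac: "a * c \<le> 1" and x: "x > 0" "x < c"
  shows "(a^2*x/(x+1) - 1/(c-x)) < (a^2*0/(0+1) - 1/(c-0))"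
proof -
  have "(a^2*0/(0+1) - 1/(c-0)) - (a^2*x/(x+1) - 1/(c-x)) = (0 - x) * (a^2/((x+1)*(0+1)) - 1/((c-x)*(c-0)))"
    using fdiff_gen[of x 0 c a] x by simp
  also have "\<dots> > 0"
  proof -
    have "a^2 * (c*(c-x)) < 1 * (x+1)"
    proof -
      have "a^2*(c*(c-x)) \<le> a^2 * c^2" using x c by (intro mult_left_mono) (auto simp: power2_eq_square)
      also have "\<dots> = (a*c)^2" by (simp add: power_mult_distrib)
      also have "\<dots> \<le> 1" using ac a c by (simp add: power_le_one)
      finally show ?thesis using x by simp
    qed
    hence "a^2/((x+1)*(0+1)) < 1/((c-x)*(c-0))" using x c by (simp add: field_simps)
    thus ?thesis using x by (simp add: mult_pos_neg)
  qed
  finally show ?thesis by simp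
qed

lemma bid_eq:
  assumes g: "g > 0" and eq: "sym_equilibrium g \<sigma>" and v: "v \<in> {0<..1}"
  shows "fst (\<sigma> v) = max 0 ((sqrt g * (v^2/2) - 1)/(sqrt g + 1))"
proof -
  define a where "a = sqrt g"
  have a0: "a > 0" using g unfolding a_def by simp
  have ga: "g = a^2" using g unfolding a_def by simp
  define c where "c = v^2/2"
  have c0: "c > 0" using v unfolding c_def by simp
  define m where "m = fst (\<sigma> v)"
  define t where "t = snd (\<sigma> v)"
  have m0: "m \<ge> 0" and t0: "t > 0" using eq v unfolding sym_equilibrium_def m_def t_def by auto
  have cm: "m + 1/t = c" using cost_eq[OF eq v] unfolding cost_def m_def t_def c_def .
  have mc: "m < c" using cm t0 by (smt (verit) divide_pos_pos)
  have tm: "t = 1/(c - m)"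
  proof -
    have "c - m = 1/t" using cm by simp
    thus ?thesis using t0 by simp
  qed
  define f where "f x = a^2*x/(x+1) - 1/(c-x)" for x
  have sc: "score g m t = f m" unfolding score_def f_def tm ga ..
  have costmin: "\<And>m' t'. m' \<ge> 0 \<Longrightarrow> t' > 0 \<Longrightarrow> score g m' t' \<ge> score g m t \<Longrightarrow> cost m t \<le> cost m' t'"
    using eq v unfolding sym_equilibrium_def m_def t_def by blast
  have opt: "f x \<le> f m" if x: "0 \<le> x" "x < c" for x
  proof (rule ccontr)
    assume "\<not> f x \<le> f m"
    hence gt: "f x > f m" by simp
    define t' where "t' = 1/(c-x) + (f x - f m)"
    have p: "1/(c-x) > 0" using x by simp
    have t'pos: "t' > 0" using p gt unfolding t'_def by linarith
    have "score g x t' = f m" unfolding score_def t'_def f_def ga by simp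
    hence "cost m t \<le> cost x t'" using costmin[OF x(1) t'pos] sc by simp
    moreover have "1/t' < c - x"
    proof -
      have "1/(c-x) < t'" using gt unfolding t'_def by simp
      hence "1 < t' * (c-x)" using x by (simp add: field_simps)
      thus ?thesis using t'pos by (simp add: field_simps)
    qed
    ultimately have "cost m t < c" unfolding cost_def by simp
    thus False using cm unfolding cost_def by simp
  qed
  show ?thesis
  proof (cases "a * c > 1")
    case True
    define M where "M = (a*c - 1)/(a+1)"
    have M0: "M > 0" using True a0 unfolding M_def by simp
    have Mc: "M < c" using a0 c0 unfolding M_def by (simp add: field_simps)
    have "m = M"
    proof (rule ccontr)
      assume "m \<noteq> M"
      from interior_case[OF a0 True m0 mc M_def this] have "f m < f M" unfolding f_def .
      with opt[of M] M0 Mc show False by simp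
    qed
    thus ?thesis using M0 unfolding m_def M_def a_def c_def by simp
  next
    case False
    have "m = 0"
    proof (rule ccontr)
      assume "m \<noteq> 0"
      hence "m > 0" using m0 by simp
      from corner_case[OF a0 c0 _ this mc] False have "f m < f 0" unfolding f_def by simp
      with opt[of 0] c0 show False by simp
    qed
    moreover have "(sqrt g * (v^2/2) - 1)/(sqrt g + 1) \<le> 0"
      using False a0 unfolding a_def c_def by (intro divide_nonpos_pos) (auto simp: add_pos_pos)
    ultimately show ?thesis unfolding m_def by simp
  qed
qed



definition Hb :: "real \<Rightarrow> real" where "Hb u = (1 - 3*u^2 + 2*u^3)/(6 + 3*u^2)"

lemma Hb_mono:
  fixes x y :: real
  assumes "0 < y" "y < x" "x \<le> 1/2"
  shows "Hb x < Hb y"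
proof -
  let ?P = "\<lambda>u::real. 1 - 3*u^2 + 2*u^3" and ?Q = "\<lambda>u::real. 6 + 3*u^2"
  have id: "?P y * ?Q x - ?P x * ?Q y = (x - y) * (21*(x+y) - 12*(x^2+x*y+y^2) - 6*(x^2*y^2))"
    by (simp add: algebra_simps power2_eq_square power3_eq_cube)
  have b1: "x^2 \<le> x/2" "y^2 \<le> y/2" "x*y \<le> x/2" "x^2*y^2 \<le> x/8"
  proof -
    show "x^2 \<le> x/2" using mult_left_mono[of x "1/2" x] assms by (simp add: power2_eq_square)
    show "y^2 \<le> y/2" using mult_left_mono[of y "1/2" y] assms by (simp add: power2_eq_square)
    show "x*y \<le> x/2" using mult_left_mono[of y "1/2" x] assms by simp
    have "x^2*y^2 \<le> (x/2)*(1/4)"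
    proof (rule mult_mono)
      show "x^2 \<le> x/2" using mult_left_mono[of x "1/2" x] assms by (simp add: power2_eq_square)
      have "y^2 \<le> (1/2)^2" using assms by (intro power_mono) auto
      thus "y^2 \<le> 1/4" by (simp add: power2_eq_square)
    qed (use assms in auto)
    thus "x^2*y^2 \<le> x/8" by simp
  qed
  have "21*(x+y) - 12*(x^2+x*y+y^2) - 6*(x^2*y^2) > 0" 
  proof -
    have s1: "(x^2+x*y+y^2) \<le> x + y/2" using b1(1-3) by linarith
    have s2: "(x^2*y^2) \<le> x/8" using b1(4) assms by linarith
    define S where "S = x^2+x*y+y^2"
    define T where "T = x^2*y^2"
    have "0 < 21*x + 21*y - 12*S - 6*T" using s1 s2 assms unfolding S_def[symmetric] T_def[symmetric] by linarith
    hence "0 < 21*(x+y) - 12*S - 6*T" by (simp add: distrib_left)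
    thus ?thesis unfolding S_def T_def .
  qed
  hence "?P y * ?Q x - ?P x * ?Q y > 0" unfolding id using assms by simp
  moreover have "?Q x > 0" "?Q y > 0" by (auto intro: add_pos_nonneg)
  ultimately show ?thesis unfolding Hb_def by (simp add: divide_less_eq less_divide_eq field_simps)
qed

lemma Hb_lim: "((\<lambda>g. Hb (sqrt (2 / sqrt g))) \<longlongrightarrow> 1/6) at_top"
  unfolding Hb_def by real_asymp





lemma integral_val:
  assumes g: "g > 4"
  shows "integral {0..1} (\<lambda>v. max 0 ((sqrt g*(v^2/2) - 1)/(sqrt g + 1))) = Hb (sqrt (2 / sqrt g))"
proof -
  define a where "a = sqrt g"
  have a2: "a > 2" using g unfolding a_def using real_sqrt_less_mono[of 4 g] by (simp add: real_sqrt_four)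
  define u where "u = sqrt (2/a)"
  have u0: "u > 0" using a2 unfolding u_def by simp
  have uu: "u^2 = 2/a" using a2 unfolding u_def by simp
  have u1: "u < 1" using a2 unfolding u_def by simp
  have au: "a = 2/u^2" using uu a2 u0 by (simp add: field_simps)
  define F where "F v = max 0 ((a * (v^2/2) - 1)/(a+1))" for v
  define P where "P v = (a * (v^2/2) - 1)/(a+1)" for v
  define Q where "Q v = (a * v^3/6 - v)/(a+1)" for v
  have contF: "continuous_on {0..1} F" unfolding F_def by (intro continuous_intros) (use a2 in auto)
  have intF: "F integrable_on {0..1}" by (rule integrable_continuous_interval[OF contF])
  have split: "integral {0..u} F + integral {u..1} F = integral {0..1} F"
    using u0 u1 intF by (intro Henstock_Kurzweil_Integration.integral_combine) auto
  have z: "integral {0..u} F = 0"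
  proof -
    have "F v = 0" if "v \<in> {0..u}" for v
    proof -
      have "v^2 \<le> u^2" using that by (intro power_mono) auto
      hence "a * (v^2/2) \<le> a*(u^2/2)" using a2 by (intro mult_left_mono) auto
      also have "\<dots> = 1" using uu a2 by simp
      finally have "(a * (v^2/2) - 1)/(a+1) \<le> 0" using a2 by (intro divide_nonpos_pos) auto
      thus ?thesis unfolding F_def by simp
    qed
    hence "integral {0..u} F = integral {0..u} (\<lambda>v. 0)" by (intro integral_cong) auto
    thus ?thesis by simp
  qed
  have p: "integral {u..1} F = integral {u..1} P"
  proof (intro integral_cong)
    fix v assume v: "v \<in> {u..1}"
    have "u^2 \<le> v^2" using v u0 by (intro power_mono) auto
    hence "a*(u^2/2) \<le> a * (v^2/2)" using a2 by (intro mult_left_mono) auto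
    moreover have "a*(u^2/2) = 1" using uu a2 by simp
    ultimately have "0 \<le> a * (v^2/2) - 1" by linarith
    hence "0 \<le> P v" unfolding P_def using a2 by (intro divide_nonneg_pos) auto
    thus "F v = P v" unfolding F_def P_def by simp
  qed
  have ftc: "(P has_integral (Q 1 - Q u)) {u..1}"
  proof (rule fundamental_theorem_of_calculus)
    show "u \<le> 1" using u1 by simp
    fix x assume "x \<in> {u..1}"
    define k where "k = 1/(a+1)"
    have Qk: "Q = (\<lambda>v. k * (a * v^3/6 - v))" unfolding Q_def k_def by auto
    have Pk: "P x = k * (a * (x^2/2) - 1)" unfolding P_def k_def by simp
    have "((\<lambda>v. k * (a * v^3/6 - v)) has_real_derivative k * (a * (3 * x^2)/6 - 1)) (at x within {u..1})"
      by (auto intro!: derivative_eq_intros)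
    moreover have "k * (a * (3 * x^2)/6 - 1) = P x" unfolding Pk by simp
    ultimately show "(Q has_vector_derivative P x) (at x within {u..1})"
      unfolding Qk has_real_derivative_iff_has_vector_derivative[symmetric] by simp
  qed
  have "integral {0..1} F = Q 1 - Q u" using split z p ftc by (simp add: integral_unique)
  also have "\<dots> = Hb u"
  proof -
    have "Q 1 - Q u = ((a/6 - 1) - (a*u^3/6 - u))/(a+1)" unfolding Q_def by (simp add: diff_divide_distrib[symmetric])
    also have "\<dots> = Hb u"
    proof -
      have d1: "6 + u * (u * 3) \<noteq> 0" using u0 by (smt (verit) mult_pos_pos)
      have d2: "u * (u * 6) + u * (u * (u * (u * 3))) \<noteq> 0" using u0 by (smt (verit) mult_pos_pos)
      show ?thesis unfolding au Hb_def using u0 d1 d2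
        by (simp add: field_simps power2_eq_square power3_eq_cube)
    qed
    finally show ?thesis .
  qed
  finally show ?thesis unfolding F_def a_def u_def .
qed

theorem proposition6:
  fixes \<sigma> :: "real \<Rightarrow> real \<Rightarrow> real \<times> real"
  assumes "\<forall>g>0. sym_equilibrium g (\<sigma> g)"
  shows "((\<lambda>g. exp_bid (\<sigma> g)) \<longlongrightarrow> 1/6) at_top
    \<and> (\<exists>G. \<forall>g1 g2. G \<le> g1 \<longrightarrow> g1 < g2 \<longrightarrow> exp_bid (\<sigma> g1) < exp_bid (\<sigma> g2))"
proof -
  have eb: "exp_bid (\<sigma> g) = Hb (sqrt (2 / sqrt g))" if g: "g > 4" for g
  proof -
    have g0: "g > 0" using g by simp
    have eq: "sym_equilibrium g (\<sigma> g)" using assms g0 by auto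
    have "exp_bid (\<sigma> g) = integral {0..1} (\<lambda>v. max 0 ((sqrt g*(v^2/2) - 1)/(sqrt g + 1)))"
      unfolding exp_bid_def
    proof (rule integral_spike[of "{0}"])
      show "negligible {0::real}" by simp
      fix x assume "x \<in> {0..1} - {0::real}"
      hence "x \<in> {0<..1}" by auto
      thus "max 0 ((sqrt g*(x^2/2) - 1)/(sqrt g + 1)) = fst (\<sigma> g x)"
        using bid_eq[OF g0 eq] by simp
    qed
    also have "\<dots> = Hb (sqrt (2 / sqrt g))" by (rule integral_val[OF g])
    finally show ?thesis .
  qed
  have lim: "((\<lambda>g. exp_bid (\<sigma> g)) \<longlongrightarrow> 1/6) at_top"
  proof (rule Lim_transform_eventually[OF Hb_lim])
    show "\<forall>\<^sub>F g in at_top. Hb (sqrt (2 / sqrt g)) = exp_bid (\<sigma> g)"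
      unfolding eventually_at_top_linorder by (rule exI[of _ 5]) (simp add: eb)
  qed
  have mono: "\<forall>g1 g2. 64 \<le> g1 \<longrightarrow> g1 < g2 \<longrightarrow> exp_bid (\<sigma> g1) < exp_bid (\<sigma> g2)"
  proof (intro allI impI)
    fix g1 g2 :: real assume g1: "64 \<le> g1" and g12: "g1 < g2"
    have s1: "sqrt g1 \<ge> 8" using real_sqrt_le_mono[OF g1] by simp
    have s12: "sqrt g1 < sqrt g2" using g12 by simp
    have u12: "sqrt (2 / sqrt g2) < sqrt (2 / sqrt g1)"
    proof -
      have p1: "sqrt g1 > 0" using s1 by linarith
      have p2: "sqrt g2 > 0" using p1 s12 by simp
      have "2 / sqrt g2 < 2 / sqrt g1" using s12 p1 p2 mult_pos_pos[OF p2 p1] by (intro divide_strict_left_mono) auto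
      thus ?thesis by simp
    qed
    have u2: "0 < sqrt (2 / sqrt g2)" using s1 s12 g1 g12 by simp
    have "2 / sqrt g1 \<le> 2 / 8" using s1 g1 by (intro divide_left_mono) auto
    hence "sqrt (2 / sqrt g1) \<le> sqrt (1/4)" by (intro real_sqrt_le_mono) simp
    also have "sqrt (1/4) = (1/2::real)" by (simp add: real_sqrt_divide)
    finally have u1: "sqrt (2 / sqrt g1) \<le> 1/2" .
    have "Hb (sqrt (2 / sqrt g1)) < Hb (sqrt (2 / sqrt g2))" by (rule Hb_mono[OF u2 u12 u1])
    thus "exp_bid (\<sigma> g1) < exp_bid (\<sigma> g2)" using eb[of g1] eb[of g2] g1 g12 by simp
  qed
  show ?thesis using lim mono by blast
qed

end
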